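(* Assume $\sigma$ is $1$-Lipschitz and $\sigma(0)=0$. Let $\bar w=(\bar w_1,\bar w_2)\in\mathsf W$ be a minimizer of $w\mapsto\|f_w-f_{\mathbf P}\|_{\mathbb L_2(\mu)}$ and $p=\mathcal N(\bar w_1,\tau_1^2\mathbf I_{D_0D_1})\otimes\mathcal N(\bar w_2,\tau_2^2\mathbf I_{D_1D_2})$ with $\tau_1,\tau_2>0$. Then, with $G_1(w)=\|f_w-f_{w_1,\bar w_2}\|^2_{\mathbb L_2(\mu)}$, $$\int_{\mathsf W}G_1(w)\,p(dw)\le M_2^2D_0D_1D_2\tau_1^2\tau_2^2+\bar M_2^2D_2\|\bar w_1\|_F^2\tau_2^2.$$
   Context: $\mathcal X\subset\mathbb R^{D_0}$ Borel, $\mu$ a $\sigma$-finite measure on $\mathcal X$, $M_2^2=D_0^{-1}\int\|x\|_2^2\mu(dx)<\infty$, $\bar M_2^2:=\|\int_{\mathcal X}xx^\top\mu(dx)\|_{\mathrm{sp}}$ (spectral norm), $\|f\|^2_{\mathbb L_2(\mu)}=\int\|f(x)\|_2^2\mu(dx)$, $f_{\mathbf P}\in\mathbb L_2(\mu)$ a given target. Parameters $w=(w_1,w_2)\in\mathsf W=\mathbb R^{D_0\times D_1}\times\mathbb R^{D_1\times D_2}$; $f_w=f_{w_1,w_2}$, $f_w(x)=w_2^\top\bar\sigma(w_1^\top x)$, $\bar\sigma$ coordinatewise; $\|\cdot\|_F$ Frobenius norm. *)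

theory Defs
  imports "HOL-Probability.Probability"
begin

definition act_vec :: "(real \<Rightarrow> real) \<Rightarrow> real^'n \<Rightarrow> real^'n" where
  "act_vec \<sigma> v = (\<chi> j. \<sigma> (v $ j))"

text \<open>Two-layer network f_w(x) = w2^T sigma(w1^T x), w1 : D0 x D1, w2 : D1 x D2.\<close>
definition net :: "(real \<Rightarrow> real) \<Rightarrow> real^'n1^'n0 \<Rightarrow> real^'n2^'n1 \<Rightarrow> real^'n0 \<Rightarrow> real^'n2" where
  "net \<sigma> w1 w2 x = transpose w2 *v act_vec \<sigma> (transpose w1 *v x)"

definition L2_dist_sq :: "'a measure \<Rightarrow> ('a \<Rightarrow> 'b::real_normed_vector) \<Rightarrow> ('a \<Rightarrow> 'b) \<Rightarrow> ennreal" where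
  "L2_dist_sq \<mu> f g = (\<integral>\<^sup>+ x. ennreal ((norm (f x - g x))\<^sup>2) \<partial>\<mu>)"

definition frob_norm :: "real^'m^'n \<Rightarrow> real" where
  "frob_norm A = sqrt (\<Sum>i\<in>UNIV. \<Sum>j\<in>UNIV. (A $ i $ j)\<^sup>2)"

definition M2_sq :: "(real^'n0) measure \<Rightarrow> real" where
  "M2_sq \<mu> = (\<integral> x. (norm x)\<^sup>2 \<partial>\<mu>) / real CARD('n0)"

definition second_moment :: "(real^'n0) measure \<Rightarrow> real^'n0^'n0" where
  "second_moment \<mu> = (\<chi> i j. \<integral> x. x $ i * x $ j \<partial>\<mu>)"

definition Mbar2_sq :: "(real^'n0) measure \<Rightarrow> real" where
  "Mbar2_sq \<mu> = onorm (\<lambda>v. second_moment \<mu> *v v)"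

definition gauss_mat :: "real^'m^'n \<Rightarrow> real \<Rightarrow> (real^'m^'n) measure" where
  "gauss_mat m \<tau> = density lborel
     (\<lambda>w. ennreal (\<Prod>i\<in>UNIV. \<Prod>j\<in>UNIV. normal_density (m $ i $ j) \<tau> (w $ i $ j)))"

end

theory Submission
  imports Defs
begin


lemma lborel_prod_integral:
  fixes f :: "'a::euclidean_space \<Rightarrow> real \<Rightarrow> real"
  assumes int: "\<And>b. b \<in> Basis \<Longrightarrow> integrable lborel (f b)"
  shows "integrable lborel (\<lambda>x::'a. \<Prod>b\<in>Basis. f b (x \<bullet> b))"
    and "(\<integral>x. (\<Prod>b\<in>Basis. f b (x \<bullet> b)) \<partial>(lborel::'a measure)) = (\<Prod>b\<in>Basis. integral\<^sup>L lborel (f b))"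
proof -
  interpret product_sigma_finite "\<lambda>_::'a. lborel::real measure" by standard
  have mb: "f b \<in> borel_measurable borel" if "b \<in> Basis" for b
    using borel_measurable_integrable[OF int[OF that]] by simp
  have m: "(\<lambda>x::'a. \<Prod>b\<in>Basis. f b (x \<bullet> b)) \<in> borel_measurable borel"
    by (intro borel_measurable_prod measurable_compose[OF _ mb]) auto
  have S: "(\<Sum>b\<in>Basis. y b *\<^sub>R b) \<bullet> c = y c" if "c \<in> Basis" for y :: "'a \<Rightarrow> real" and c
    using that by (simp add: inner_sum_left inner_Basis if_distrib cong: if_cong)
  have 1: "integrable (\<Pi>\<^sub>M b\<in>Basis. lborel) (\<lambda>y. \<Prod>b\<in>Basis. f b (y b))"
    by (rule product_integrable_prod) (auto simp: int)
  have e: "(\<lambda>y. \<Prod>b\<in>Basis. f b ((\<Sum>b\<in>Basis. y b *\<^sub>R b) \<bullet> b)) = (\<lambda>y. \<Prod>b\<in>Basis. f b (y b))"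
    by (intro ext prod.cong refl) (simp add: S)
  show "integrable lborel (\<lambda>x::'a. \<Prod>b\<in>Basis. f b (x \<bullet> b))"
    apply (subst lborel_eq)
    apply (subst integrable_distr_eq)
    using m by (simp_all add: e 1)
  show "(\<integral>x. (\<Prod>b\<in>Basis. f b (x \<bullet> b)) \<partial>(lborel::'a measure)) = (\<Prod>b\<in>Basis. integral\<^sup>L lborel (f b))"
    apply (subst lborel_eq)
    apply (subst integral_distr)
    using m by (simp_all add: e product_integral_prod int)
qed



lemma normal_int1:
  assumes "0 < \<tau>"
  shows "has_bochner_integral lborel (\<lambda>t. normal_density \<mu> \<tau> t * (t - a)) (\<mu> - a)"
proof -
  have h1: "has_bochner_integral lborel (\<lambda>t. normal_density \<mu> \<tau> t * (t - \<mu>)^(2*0+1)) 0"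
    by (rule normal_moment_odd[OF assms])
  have h0: "has_bochner_integral lborel (\<lambda>t. normal_density \<mu> \<tau> t * (t - \<mu>)^(2*0)) (fact (2 * 0) / ((2 / \<tau>\<^sup>2)^0 * fact 0))"
    by (rule normal_moment_even[OF assms])
  have "has_bochner_integral lborel (\<lambda>t. normal_density \<mu> \<tau> t * (t - \<mu>)^(2*0+1) + (normal_density \<mu> \<tau> t * (t - \<mu>)^(2*0)) * (\<mu> - a)) (0 + (fact (2 * 0) / ((2 / \<tau>\<^sup>2)^0 * fact 0)) * (\<mu> - a))"
    by (rule has_bochner_integral_add[OF h1 has_bochner_integral_mult_left[OF h0]])
  note h = this
  show ?thesis
    by (rule has_bochner_integral_cong[THEN iffD1, OF refl _ _ h]) (auto simp: algebra_simps)
qed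

lemma normal_int2:
  assumes "0 < \<tau>"
  shows "has_bochner_integral lborel (\<lambda>t. normal_density \<mu> \<tau> t * ((t - a) * (t - c))) ((\<mu> - a) * (\<mu> - c) + \<tau>\<^sup>2)"
proof -
  have h1: "has_bochner_integral lborel (\<lambda>t. normal_density \<mu> \<tau> t * (t - \<mu>)^(2*0+1)) 0"
    by (rule normal_moment_odd[OF assms])
  have h0: "has_bochner_integral lborel (\<lambda>t. normal_density \<mu> \<tau> t * (t - \<mu>)^(2*0)) (fact (2 * 0) / ((2 / \<tau>\<^sup>2)^0 * fact 0))"
    by (rule normal_moment_even[OF assms])
  have h2: "has_bochner_integral lborel (\<lambda>t. normal_density \<mu> \<tau> t * (t - \<mu>)^(2*1)) (fact (2 * 1) / ((2 / \<tau>\<^sup>2)^1 * fact 1))"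
    by (rule normal_moment_even[OF assms])
  have "has_bochner_integral lborel (\<lambda>t. normal_density \<mu> \<tau> t * (t - \<mu>)^(2*1) + (normal_density \<mu> \<tau> t * (t - \<mu>)^(2*0+1) * (2*\<mu> - a - c)
       + (normal_density \<mu> \<tau> t * (t - \<mu>)^(2*0)) * ((\<mu> - a) * (\<mu> - c))))
     ((fact (2 * 1) / ((2 / \<tau>\<^sup>2)^1 * fact 1)) + (0 * (2*\<mu> - a - c) + (fact (2 * 0) / ((2 / \<tau>\<^sup>2)^0 * fact 0)) * ((\<mu> - a) * (\<mu> - c))))"
    by (rule has_bochner_integral_add[OF h2 has_bochner_integral_add[OF has_bochner_integral_mult_left[OF h1] has_bochner_integral_mult_left[OF h0]]])
  note h = this
  show ?thesis
    apply (rule has_bochner_integral_cong[THEN iffD1, OF refl _ _ h])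
    using assms by (auto simp: algebra_simps power2_eq_square)
qed

definition gdens :: "'a::euclidean_space \<Rightarrow> real \<Rightarrow> 'a \<Rightarrow> real" where
  "gdens m \<tau> w = (\<Prod>b\<in>Basis. normal_density (m \<bullet> b) \<tau> (w \<bullet> b))"

lemma gdens_nonneg: "0 \<le> gdens m \<tau> w"
  unfolding gdens_def by (intro prod_nonneg) auto

lemma gdens_measurable[measurable]: "gdens m \<tau> \<in> borel_measurable borel"
  unfolding gdens_def by measurable

lemma gauss_prod:
  fixes f :: "'a::euclidean_space \<Rightarrow> real \<Rightarrow> real"
  assumes int: "\<And>b. b \<in> Basis \<Longrightarrow> integrable lborel (\<lambda>t. normal_density (m \<bullet> b) \<tau> t * f b t)"
    and mb: "\<And>b. b \<in> Basis \<Longrightarrow> f b \<in> borel_measurable borel"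
  shows "integrable (density lborel (\<lambda>w. ennreal (gdens m \<tau> w))) (\<lambda>w. \<Prod>b\<in>Basis. f b (w \<bullet> b))"
    and "(\<integral>w. (\<Prod>b\<in>Basis. f b (w \<bullet> b)) \<partial>density lborel (\<lambda>w. ennreal (gdens m \<tau> w)))
         = (\<Prod>b\<in>Basis. \<integral>t. normal_density (m \<bullet> b) \<tau> t * f b t \<partial>lborel)"
proof -
  have m: "(\<lambda>x::'a. \<Prod>b\<in>Basis. f b (x \<bullet> b)) \<in> borel_measurable lborel"
    by (simp, intro borel_measurable_prod measurable_compose[OF _ mb]) auto
  have e: "(\<lambda>w. gdens m \<tau> w *\<^sub>R (\<Prod>b\<in>Basis. f b (w \<bullet> b))) = (\<lambda>w. \<Prod>b\<in>Basis. normal_density (m \<bullet> b) \<tau> (w \<bullet> b) * f b (w \<bullet> b))"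
    by (simp add: gdens_def prod.distrib)
  show "integrable (density lborel (\<lambda>w. ennreal (gdens m \<tau> w))) (\<lambda>w. \<Prod>b\<in>Basis. f b (w \<bullet> b))"
    apply (subst integrable_density)
    using m apply (auto simp: gdens_nonneg)[3]
    unfolding e by (rule lborel_prod_integral(1)[OF int])
  show "(\<integral>w. (\<Prod>b\<in>Basis. f b (w \<bullet> b)) \<partial>density lborel (\<lambda>w. ennreal (gdens m \<tau> w)))
         = (\<Prod>b\<in>Basis. \<integral>t. normal_density (m \<bullet> b) \<tau> t * f b t \<partial>lborel)"
    apply (subst integral_density)
    using m apply (auto simp: gdens_nonneg)[3]
    unfolding e by (rule lborel_prod_integral(2)[OF int])
qed



lemma Basis_mat: "(Basis :: (real^'m^'n) set) = (\<lambda>(i,j). axis i (axis j 1)) ` UNIV"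
  by (auto simp: Basis_vec_def)

lemma inj_mat: "inj (\<lambda>(i,j). axis i (axis j (1::real)) :: real^'m^'n)"
  by (auto simp: inj_on_def axis_eq_axis)

lemma entry_mat: "(w::real^'m^'n) \<bullet> axis i (axis j 1) = w $ i $ j"
  by (simp add: inner_axis)

lemma prod_Basis_mat: "(\<Prod>b\<in>(Basis :: (real^'m^'n) set). g b) = (\<Prod>i\<in>UNIV. \<Prod>j\<in>UNIV. g (axis i (axis j 1)))"
proof -
  have "(\<Prod>b\<in>(Basis :: (real^'m^'n) set). g b) = (\<Prod>p\<in>UNIV. g ((\<lambda>(i,j). axis i (axis j 1)) p))"
    unfolding Basis_mat by (subst prod.reindex[OF inj_mat]) simp
  also have "\<dots> = (\<Prod>i\<in>UNIV. \<Prod>j\<in>UNIV. g (axis i (axis j 1)))"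
    unfolding prod.cartesian_product UNIV_Times_UNIV by (rule prod.cong) auto
  finally show ?thesis .
qed

lemma gauss_mat_eq: "gauss_mat m \<tau> = density lborel (\<lambda>w. ennreal (gdens m \<tau> w))"
  unfolding gauss_mat_def gdens_def prod_Basis_mat entry_mat ..

lemma gauss_mat_prob: "0 < \<tau> \<Longrightarrow> prob_space (gauss_mat m \<tau>)"
proof -
  assume t: "0 < \<tau>"
  have i: "integrable lborel (gdens m \<tau>)" and v: "integral\<^sup>L lborel (gdens m \<tau>) = 1"
    using lborel_prod_integral[of "\<lambda>b. normal_density (m \<bullet> b) \<tau>"] t
    by (auto simp: gdens_def[abs_def])
  show ?thesis
    unfolding gauss_mat_eq
    by standard (simp add: emeasure_density nn_integral_eq_integral gdens_nonneg i v)
qed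

lemma gauss_mat_sets[simp]: "sets (gauss_mat m \<tau>) = sets borel"
  unfolding gauss_mat_eq by simp

lemma gauss_mat_mom:
  fixes m :: "real^'m^'n"
  assumes t: "0 < \<tau>"
  shows "integrable (gauss_mat m \<tau>) (\<lambda>w. (w$i$j - a) * (w$k$l - c))"
    and "(\<integral>w. (w$i$j - a) * (w$k$l - c) \<partial>gauss_mat m \<tau>) =
           (m$i$j - a) * (m$k$l - c) + (if i = k \<and> j = l then \<tau>\<^sup>2 else 0)"
proof -
  define e1 :: "real^'m^'n" where "e1 = axis i (axis j 1)"
  define e2 :: "real^'m^'n" where "e2 = axis k (axis l 1)"
  have eB: "e1 \<in> Basis" "e2 \<in> Basis" by (auto simp: e1_def e2_def)
  have ee: "(e1 = e2) = (i = k \<and> j = l)" by (auto simp: e1_def e2_def axis_eq_axis)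
  define f where "f b t = (if b = e1 then t - a else 1) * (if b = e2 then t - c else 1)" for b :: "real^'m^'n" and t :: real
  define I where "I b = (if b = e1 \<and> b = e2 then (m\<bullet>b - a) * (m\<bullet>b - c) + \<tau>\<^sup>2 else
     if b = e1 then m\<bullet>b - a else if b = e2 then m\<bullet>b - c else 1)" for b :: "real^'m^'n"
  have hb: "has_bochner_integral lborel (\<lambda>t. normal_density (m \<bullet> b) \<tau> t * f b t) (I b)" for b
  proof -
    consider "b = e1" "b = e2" | "b = e1" "b \<noteq> e2" | "b \<noteq> e1" "b = e2" | "b \<noteq> e1" "b \<noteq> e2" by blast
    then show ?thesis
    proof cases
      case 1 then show ?thesis using normal_int2[OF t, of "m \<bullet> b" a c] by (simp add: f_def I_def)
    next
      case 2 then show ?thesis using normal_int1[OF t, of "m \<bullet> b" a] by (simp add: f_def I_def)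
    next
      case 3 then show ?thesis using normal_int1[OF t, of "m \<bullet> b" c] by (simp add: f_def I_def)
    next
      case 4 then show ?thesis using integrable_normal_density[OF t] integral_normal_density[OF t]
        by (simp add: f_def I_def has_bochner_integral_iff)
    qed
  qed
  have mb: "f b \<in> borel_measurable borel" for b unfolding f_def by measurable
  have pf: "(\<Prod>b\<in>Basis. f b (w \<bullet> b)) = (w$i$j - a) * (w$k$l - c)" for w :: "real^'m^'n"
    unfolding f_def prod.distrib using eB
    by (simp add: prod.delta e1_def e2_def entry_mat)
  have pI: "(\<Prod>b\<in>Basis. I b) = (m$i$j - a) * (m$k$l - c) + (if i = k \<and> j = l then \<tau>\<^sup>2 else 0)"
  proof (cases "e1 = e2")
    case True
    have "I b = (if b = e1 then (m\<bullet>b - a) * (m\<bullet>b - c) + \<tau>\<^sup>2 else 1)" for b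
      using True by (auto simp: I_def)
    then show ?thesis using True ee eB
      by (simp add: prod.delta e1_def e2_def entry_mat)
  next
    case False
    have "I b = (if b = e1 then m\<bullet>b - a else 1) * (if b = e2 then m\<bullet>b - c else 1)" for b
      using False by (auto simp: I_def)
    then show ?thesis using False ee eB
      by (auto simp add: prod.distrib prod.delta e1_def e2_def entry_mat)
  qed
  have int: "b \<in> Basis \<Longrightarrow> integrable lborel (\<lambda>t. normal_density (m \<bullet> b) \<tau> t * f b t)" for b
    using hb by (auto simp: has_bochner_integral_iff)
  have val: "(\<integral>t. normal_density (m \<bullet> b) \<tau> t * f b t \<partial>lborel) = I b" for b
    using hb by (auto simp: has_bochner_integral_iff)
  show "integrable (gauss_mat m \<tau>) (\<lambda>w. (w$i$j - a) * (w$k$l - c))"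
    using gauss_prod(1)[OF int mb] unfolding gauss_mat_eq pf .
  show "(\<integral>w. (w$i$j - a) * (w$k$l - c) \<partial>gauss_mat m \<tau>) =
           (m$i$j - a) * (m$k$l - c) + (if i = k \<and> j = l then \<tau>\<^sup>2 else 0)"
    using gauss_prod(2)[OF int mb] unfolding gauss_mat_eq pf val pI .
qed



lemma norm_sq_vec: "(norm (y::real^'n))\<^sup>2 = (\<Sum>k\<in>UNIV. (y $ k)\<^sup>2)"
  unfolding power2_norm_eq_inner inner_vec_def by (simp add: power2_eq_square)

lemma tmv_comp: "(transpose (w::real^'k^'j) *v v - transpose c *v v) $ k = (\<Sum>j\<in>UNIV. (w$j$k - c$j$k) * v$j)"
  by (simp add: matrix_vector_mult_def transpose_def sum_subtractf algebra_simps)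

lemma sqexp: "(norm (transpose (w::real^'k^'j) *v v - transpose c *v v))\<^sup>2 =
  (\<Sum>k\<in>UNIV. \<Sum>j\<in>UNIV. \<Sum>j'\<in>UNIV. (v$j * v$j') * ((w$j$k - c$j$k) * (w$j'$k - c$j'$k)))"
  unfolding norm_sq_vec tmv_comp
  by (simp add: power2_eq_square sum_product algebra_simps)

lemma gauss_quad:
  fixes m c :: "real^'k^'j" and v :: "real^'j"
  assumes t: "0 < \<tau>"
  shows "(\<integral>\<^sup>+ w. ennreal ((norm (transpose w *v v - transpose c *v v))\<^sup>2) \<partial>gauss_mat m \<tau>)
       = ennreal ((norm (transpose m *v v - transpose c *v v))\<^sup>2 + \<tau>\<^sup>2 * real CARD('k) * (norm v)\<^sup>2)"
proof -
  let ?G = "gauss_mat m \<tau>"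
  have int: "integrable ?G (\<lambda>w. (norm (transpose w *v v - transpose c *v v))\<^sup>2)"
    unfolding sqexp
    by (intro Bochner_Integration.integrable_sum integrable_mult_right gauss_mat_mom(1)[OF t])
  have "(\<integral>w. (norm (transpose w *v v - transpose c *v v))\<^sup>2 \<partial>?G) =
    (\<Sum>k\<in>(UNIV::'k set). \<Sum>j\<in>UNIV. \<Sum>j'\<in>UNIV. (v$j * v$j') * ((m$j$k - c$j$k) * (m$j'$k - c$j'$k) + (if j = j' \<and> k = k then \<tau>\<^sup>2 else 0)))"
    unfolding sqexp
    apply (subst Bochner_Integration.integral_sum, intro Bochner_Integration.integrable_sum integrable_mult_right gauss_mat_mom(1)[OF t])
    apply (rule sum.cong[OF refl])
    apply (subst Bochner_Integration.integral_sum, intro Bochner_Integration.integrable_sum integrable_mult_right gauss_mat_mom(1)[OF t])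
    apply (rule sum.cong[OF refl])
    apply (subst Bochner_Integration.integral_sum, intro Bochner_Integration.integrable_sum integrable_mult_right gauss_mat_mom(1)[OF t])
    apply (rule sum.cong[OF refl])
    apply (subst integral_mult_right_zero)
    apply (subst gauss_mat_mom(2)[OF t])
    apply simp
    done
  also have "\<dots> = (\<Sum>k\<in>(UNIV::'k set). \<Sum>j\<in>UNIV. \<Sum>j'\<in>UNIV. (v$j * v$j') * ((m$j$k - c$j$k) * (m$j'$k - c$j'$k)))
      + (\<Sum>k\<in>(UNIV::'k set). \<Sum>j\<in>UNIV. \<Sum>j'\<in>UNIV. (v$j * v$j') * (if j = j' then \<tau>\<^sup>2 else 0))"
    by (simp add: distrib_left sum.distrib)
  also have "\<dots> = (norm (transpose m *v v - transpose c *v v))\<^sup>2 + \<tau>\<^sup>2 * real CARD('k) * (norm v)\<^sup>2"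
  proof -
    have h: "\<And>(a::real) (j::'j) j'. a * (if j = j' then \<tau>\<^sup>2 else 0) = (if j = j' then a * \<tau>\<^sup>2 else 0)" by simp
    have "(\<Sum>k\<in>(UNIV::'k set). \<Sum>j\<in>UNIV. \<Sum>j'\<in>UNIV. (v$j * v$j') * (if j = j' then \<tau>\<^sup>2 else 0)) =
          (\<Sum>k\<in>(UNIV::'k set). \<Sum>j\<in>UNIV. (v$j)\<^sup>2 * \<tau>\<^sup>2)"
      unfolding h by (simp add: power2_eq_square)
    also have "\<dots> = \<tau>\<^sup>2 * real CARD('k) * (norm v)\<^sup>2"
      by (simp add: norm_sq_vec sum_distrib_left mult_ac)
    finally show ?thesis unfolding sqexp[of m v c] by simp
  qed
  finally have val: "(\<integral>w. (norm (transpose w *v v - transpose c *v v))\<^sup>2 \<partial>?G) = (norm (transpose m *v v - transpose c *v v))\<^sup>2 + \<tau>\<^sup>2 * real CARD('k) * (norm v)\<^sup>2" .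
  show ?thesis
    by (subst nn_integral_eq_integral[OF int]) (simp_all only: val, simp)
qed



lemma tmv_comp0: "(transpose (w::real^'k^'j) *v v) $ k = (\<Sum>j\<in>UNIV. w$j$k * v$j)"
  by (simp add: matrix_vector_mult_def transpose_def)

lemma sqexp0: "(norm (transpose (w::real^'k^'j) *v v))\<^sup>2 =
  (\<Sum>k\<in>UNIV. \<Sum>j\<in>UNIV. \<Sum>j'\<in>UNIV. (w$j$k * w$j'$k) * (v$j * v$j'))"
  unfolding norm_sq_vec tmv_comp0
  by (simp add: power2_eq_square sum_product algebra_simps)

lemma second_moment_bound:
  fixes \<mu> :: "(real^'n0) measure" and W :: "real^'n1^'n0"
  assumes s: "sets \<mu> = sets borel"
    and fin: "(\<integral>\<^sup>+ x. ennreal ((norm x)\<^sup>2) \<partial>\<mu>) < \<infinity>"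
  shows "integrable \<mu> (\<lambda>x. (norm x)\<^sup>2)"
    and "integrable \<mu> (\<lambda>x. (norm (transpose W *v x))\<^sup>2)"
    and "(\<integral>x. (norm (transpose W *v x))\<^sup>2 \<partial>\<mu>) \<le> Mbar2_sq \<mu> * (frob_norm W)\<^sup>2"
proof -
  have mcong: "f \<in> borel_measurable \<mu>" if "f \<in> borel_measurable borel" for f :: "real^'n0 \<Rightarrow> real"
    using that measurable_cong_sets[OF s refl] by blast
  show in2: "integrable \<mu> (\<lambda>x. (norm x)\<^sup>2)"
    unfolding integrable_iff_bounded using fin by (auto intro!: mcong)
  have ii: "integrable \<mu> (\<lambda>x. x$i * x$j)" for i j
  proof (rule Bochner_Integration.integrable_bound[OF in2])
    show "(\<lambda>x. x$i * x$j) \<in> borel_measurable \<mu>" by (intro mcong) measurable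
    show "AE x in \<mu>. norm (x$i * x$j) \<le> norm ((norm x)\<^sup>2)"
    proof (intro AE_I2)
      fix x :: "real^'n0"
      have "\<bar>x$i\<bar> * \<bar>x$j\<bar> \<le> norm x * norm x"
        by (intro mult_mono component_le_norm_cart) auto
      then show "norm (x$i * x$j) \<le> norm ((norm x)\<^sup>2)" by (simp add: abs_mult power2_eq_square)
    qed
  qed
  show int: "integrable \<mu> (\<lambda>x. (norm (transpose W *v x))\<^sup>2)"
    unfolding sqexp0 by (intro Bochner_Integration.integrable_sum integrable_mult_right ii)
  define S where "S = second_moment \<mu>"
  define col where "col k = (\<chi> i. W$i$k)" for k
  have "(\<integral>x. (norm (transpose W *v x))\<^sup>2 \<partial>\<mu>) = (\<Sum>k\<in>UNIV. \<Sum>j\<in>UNIV. \<Sum>j'\<in>UNIV. (W$j$k * W$j'$k) * S$j$j')"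
    unfolding sqexp0 S_def second_moment_def
    by (simp add: Bochner_Integration.integral_sum ii)
  also have "\<dots> = (\<Sum>k\<in>UNIV. col k \<bullet> (S *v col k))"
    by (rule sum.cong[OF refl]) (simp add: col_def inner_vec_def matrix_vector_mult_def sum_distrib_left mult_ac)
  also have "\<dots> \<le> (\<Sum>k\<in>UNIV. Mbar2_sq \<mu> * (norm (col k))\<^sup>2)"
  proof (rule sum_mono)
    fix k
    have "col k \<bullet> (S *v col k) \<le> norm (col k) * norm (S *v col k)" by (rule norm_cauchy_schwarz)
    also have "\<dots> \<le> norm (col k) * (Mbar2_sq \<mu> * norm (col k))"
      unfolding Mbar2_sq_def S_def
      by (intro mult_left_mono onorm) auto
    finally show "col k \<bullet> (S *v col k) \<le> Mbar2_sq \<mu> * (norm (col k))\<^sup>2"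
      by (simp add: power2_eq_square mult_ac)
  qed
  also have "\<dots> = Mbar2_sq \<mu> * (frob_norm W)\<^sup>2"
  proof -
    have "(frob_norm W)\<^sup>2 = (\<Sum>i\<in>UNIV. \<Sum>j\<in>UNIV. (W $ i $ j)\<^sup>2)"
      unfolding frob_norm_def by (rule real_sqrt_pow2) (intro sum_nonneg; simp)
    also have "\<dots> = (\<Sum>k\<in>UNIV. (norm (col k))\<^sup>2)"
      unfolding norm_sq_vec col_def by (simp, rule sum.swap)
    finally show ?thesis by (simp add: sum_distrib_left)
  qed
  finally show "(\<integral>x. (norm (transpose W *v x))\<^sup>2 \<partial>\<mu>) \<le> Mbar2_sq \<mu> * (frob_norm W)\<^sup>2" .
qed



lemma Fexp: "(norm (net \<sigma> w1 w2 x - net \<sigma> w1 c x))\<^sup>2 =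
  (\<Sum>k\<in>UNIV. (\<Sum>j\<in>UNIV. (w2 \<bullet> axis j (axis k 1) - c \<bullet> axis j (axis k 1)) *
      \<sigma> (\<Sum>i\<in>UNIV. (w1 \<bullet> axis i (axis j 1)) * x$i))\<^sup>2)"
  unfolding net_def norm_sq_vec tmv_comp entry_mat act_vec_def vec_lambda_beta tmv_comp0 ..

lemma F_meas:
  fixes c :: "real^'n2^'n1"
  assumes [measurable]: "\<sigma> \<in> borel_measurable borel"
  shows "(\<lambda>p::(((real^'n1^'n0) \<times> (real^'n2^'n1)) \<times> (real^'n0)).
     (norm (net \<sigma> (fst (fst p)) (snd (fst p)) (snd p) - net \<sigma> (fst (fst p)) c (snd p)))\<^sup>2) \<in> borel_measurable ((borel \<Otimes>\<^sub>M borel) \<Otimes>\<^sub>M borel)"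
  unfolding Fexp cart_eq_inner_axis by measurable

lemma tmv_zero: "transpose (0::real^'k^'j) *v v = 0"
  by (simp add: vec_eq_iff tmv_comp0)

lemma gauss_quad0:
  fixes m :: "real^'k^'j" and v :: "real^'j"
  assumes t: "0 < \<tau>"
  shows "(\<integral>\<^sup>+ w. ennreal ((norm (transpose w *v v))\<^sup>2) \<partial>gauss_mat m \<tau>)
       = ennreal ((norm (transpose m *v v))\<^sup>2 + \<tau>\<^sup>2 * real CARD('k) * (norm v)\<^sup>2)"
  using gauss_quad[OF t, where c=0 and v=v and m=m] by (simp only: tmv_zero diff_zero)

lemma tmv_meas: "(\<lambda>w::real^'k^'j. ennreal ((norm (transpose w *v v))\<^sup>2)) \<in> borel_measurable borel"
  unfolding sqexp0 entry_mat[symmetric] by measurable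

lemma act_sq_le:
  assumes "\<And>t. \<bar>\<sigma> t\<bar> \<le> \<bar>t\<bar>"
  shows "(norm (act_vec \<sigma> v))\<^sup>2 \<le> (norm v)\<^sup>2"
  unfolding norm_sq_vec act_vec_def vec_lambda_beta
proof (rule sum_mono)
  fix j
  have "\<bar>\<sigma> (v$j)\<bar>\<^sup>2 \<le> \<bar>v$j\<bar>\<^sup>2" by (rule power_mono[OF assms]) simp
  then show "(\<sigma> (v$j))\<^sup>2 \<le> (v$j)\<^sup>2" by simp
qed

theorem lemma5:
  fixes \<mu> :: "(real^'n0) measure"
    and X :: "(real^'n0) set"
    and fP :: "real^'n0 \<Rightarrow> real^'n2"
    and \<sigma> :: "real \<Rightarrow> real"
    and wb1 :: "real^'n1^'n0" and wb2 :: "real^'n2^'n1"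
    and \<tau>1 \<tau>2 :: real
  assumes "sets \<mu> = sets borel"
    and "X \<in> sets borel"
    and "emeasure \<mu> (UNIV - X) = 0"
    and "sigma_finite_measure \<mu>"
    and "(\<integral>\<^sup>+ x. ennreal ((norm x)\<^sup>2) \<partial>\<mu>) < \<infinity>"
    and "fP \<in> borel_measurable \<mu>"
    and "(\<integral>\<^sup>+ x. ennreal ((norm (fP x))\<^sup>2) \<partial>\<mu>) < \<infinity>"
    and "1-lipschitz_on UNIV \<sigma>"
    and "\<sigma> 0 = 0"
    and "\<forall>(w1::real^'n1^'n0) (w2::real^'n2^'n1). L2_dist_sq \<mu> (net \<sigma> wb1 wb2) fP \<le> L2_dist_sq \<mu> (net \<sigma> w1 w2) fP"
    and "\<tau>1 > 0" and "\<tau>2 > 0"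
  shows "(\<integral>\<^sup>+ w. L2_dist_sq \<mu> (net \<sigma> (fst w) (snd w)) (net \<sigma> (fst w) wb2)
             \<partial>(gauss_mat wb1 \<tau>1 \<Otimes>\<^sub>M gauss_mat wb2 \<tau>2))
         \<le> ennreal (M2_sq \<mu> * real CARD('n0) * real CARD('n1) * real CARD('n2) * \<tau>1\<^sup>2 * \<tau>2\<^sup>2
                    + Mbar2_sq \<mu> * real CARD('n2) * (frob_norm wb1)\<^sup>2 * \<tau>2\<^sup>2)"
proof -
  let ?G1 = "gauss_mat wb1 \<tau>1" and ?G2 = "gauss_mat wb2 \<tau>2"
  have lip: "\<bar>\<sigma> t\<bar> \<le> \<bar>t\<bar>" for t
    using lipschitz_onD[OF assms(8), of t 0] assms(9) by (simp add: dist_real_def)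
  have \<sigma>m[measurable]: "\<sigma> \<in> borel_measurable borel"
    by (rule borel_measurable_continuous_onI[OF lipschitz_on_continuous_on[OF assms(8)]])
  interpret G1: prob_space ?G1 by (rule gauss_mat_prob[OF assms(11)])
  interpret G2: prob_space ?G2 by (rule gauss_mat_prob[OF assms(12)])
  have pG: "prob_space (?G1 \<Otimes>\<^sub>M ?G2)" by (rule prob_space_pair) unfold_locales
  interpret P: pair_sigma_finite "?G1 \<Otimes>\<^sub>M ?G2" \<mu>
    unfolding pair_sigma_finite_def using prob_space_imp_sigma_finite[OF pG] assms(4) by simp
  define F where "F p = ennreal ((norm (net \<sigma> (fst (fst p)) (snd (fst p)) (snd p) - net \<sigma> (fst (fst p)) wb2 (snd p)))\<^sup>2)"
    for p :: "((real^'n1^'n0) \<times> (real^'n2^'n1)) \<times> (real^'n0)"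
  have sets_eq: "sets ((?G1 \<Otimes>\<^sub>M ?G2) \<Otimes>\<^sub>M \<mu>) = sets ((borel \<Otimes>\<^sub>M borel) \<Otimes>\<^sub>M borel)"
    by (intro sets_pair_measure_cong) (simp_all add: assms(1))
  have Fm0: "F \<in> borel_measurable ((borel \<Otimes>\<^sub>M borel) \<Otimes>\<^sub>M borel)"
    unfolding F_def by (rule measurable_compose[OF F_meas[OF \<sigma>m] measurable_ennreal])
  have Fm: "F \<in> borel_measurable ((?G1 \<Otimes>\<^sub>M ?G2) \<Otimes>\<^sub>M \<mu>)"
    using Fm0 measurable_cong_sets[OF sets_eq refl] by blast
  define D0 where "D0 = real CARD('n0)"
  define D1 where "D1 = real CARD('n1)"
  define D2 where "D2 = real CARD('n2)"
  define q where "q x = (norm (transpose wb1 *v x))\<^sup>2" for x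
  have inner: "(\<integral>\<^sup>+ w. F (w, x) \<partial>(?G1 \<Otimes>\<^sub>M ?G2)) \<le> ennreal (\<tau>2\<^sup>2 * D2 * (q x + \<tau>1\<^sup>2 * D1 * (norm x)\<^sup>2))"
    if x: "x \<in> space \<mu>" for x
  proof -
    have Fx: "(\<lambda>w. F (w, x)) \<in> borel_measurable (?G1 \<Otimes>\<^sub>M ?G2)"
      by (rule measurable_Pair1[OF Fm x])
    have "(\<integral>\<^sup>+ w. F (w, x) \<partial>(?G1 \<Otimes>\<^sub>M ?G2)) = (\<integral>\<^sup>+ w1. \<integral>\<^sup>+ w2. F ((w1, w2), x) \<partial>?G2 \<partial>?G1)"
      using G2.nn_integral_fst[OF Fx] by simp
    also have "\<dots> = (\<integral>\<^sup>+ w1. ennreal ((norm (transpose wb2 *v act_vec \<sigma> (transpose w1 *v x) - transpose wb2 *v act_vec \<sigma> (transpose w1 *v x)))\<^sup>2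
        + \<tau>2\<^sup>2 * D2 * (norm (act_vec \<sigma> (transpose w1 *v x)))\<^sup>2) \<partial>?G1)"
      unfolding F_def net_def D2_def fst_conv snd_conv
      by (intro nn_integral_cong gauss_quad[OF assms(12)])
    also have "\<dots> \<le> (\<integral>\<^sup>+ w1. ennreal (\<tau>2\<^sup>2 * D2) * ennreal ((norm (transpose w1 *v x))\<^sup>2) \<partial>?G1)"
    proof (intro nn_integral_mono)
      fix w1 :: "real^'n1^'n0"
      have "\<tau>2\<^sup>2 * D2 * (norm (act_vec \<sigma> (transpose w1 *v x)))\<^sup>2 \<le> \<tau>2\<^sup>2 * D2 * (norm (transpose w1 *v x))\<^sup>2"
        by (intro mult_left_mono act_sq_le lip) (simp add: D2_def)
      then show "ennreal ((norm (transpose wb2 *v act_vec \<sigma> (transpose w1 *v x) - transpose wb2 *v act_vec \<sigma> (transpose w1 *v x)))\<^sup>2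
        + \<tau>2\<^sup>2 * D2 * (norm (act_vec \<sigma> (transpose w1 *v x)))\<^sup>2) \<le> ennreal (\<tau>2\<^sup>2 * D2) * ennreal ((norm (transpose w1 *v x))\<^sup>2)"
        by (simp add: ennreal_mult'[symmetric] D2_def)
    qed
    also have "\<dots> = ennreal (\<tau>2\<^sup>2 * D2) * (\<integral>\<^sup>+ w1. ennreal ((norm (transpose w1 *v x))\<^sup>2) \<partial>?G1)"
      apply (rule nn_integral_cmult)
      apply (subst measurable_cong_sets[OF gauss_mat_sets refl])
      apply (rule tmv_meas)
      done
    also have "\<dots> = ennreal (\<tau>2\<^sup>2 * D2) * ennreal (q x + \<tau>1\<^sup>2 * D1 * (norm x)\<^sup>2)"
      unfolding gauss_quad0[OF assms(11)] q_def D1_def ..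
    also have "\<dots> = ennreal (\<tau>2\<^sup>2 * D2 * (q x + \<tau>1\<^sup>2 * D1 * (norm x)\<^sup>2))"
      by (simp add: ennreal_mult'[symmetric] D2_def)
    finally show ?thesis .
  qed
  have int2: "integrable \<mu> (\<lambda>x. (norm x)\<^sup>2)" and intq: "integrable \<mu> q"
    and qle: "integral\<^sup>L \<mu> q \<le> Mbar2_sq \<mu> * (frob_norm wb1)\<^sup>2"
    using second_moment_bound(1)[OF assms(1,5)] second_moment_bound(2,3)[OF assms(1,5), of wb1] unfolding q_def[abs_def] by auto
  have "(\<integral>\<^sup>+ w. L2_dist_sq \<mu> (net \<sigma> (fst w) (snd w)) (net \<sigma> (fst w) wb2) \<partial>(?G1 \<Otimes>\<^sub>M ?G2))
      = (\<integral>\<^sup>+ w. \<integral>\<^sup>+ x. F (w, x) \<partial>\<mu> \<partial>(?G1 \<Otimes>\<^sub>M ?G2))"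
    unfolding L2_dist_sq_def F_def by simp
  also have "\<dots> = (\<integral>\<^sup>+ x. \<integral>\<^sup>+ w. F (w, x) \<partial>(?G1 \<Otimes>\<^sub>M ?G2) \<partial>\<mu>)"
    using P.Fubini'[of "\<lambda>w x. F (w, x)"] Fm by simp
  also have "\<dots> \<le> (\<integral>\<^sup>+ x. ennreal (\<tau>2\<^sup>2 * D2 * (q x + \<tau>1\<^sup>2 * D1 * (norm x)\<^sup>2)) \<partial>\<mu>)"
    by (intro nn_integral_mono inner)
  also have "\<dots> = ennreal (\<integral>x. \<tau>2\<^sup>2 * D2 * (q x + \<tau>1\<^sup>2 * D1 * (norm x)\<^sup>2) \<partial>\<mu>)"
  proof (rule nn_integral_eq_integral)
    show "integrable \<mu> (\<lambda>x. \<tau>2\<^sup>2 * D2 * (q x + \<tau>1\<^sup>2 * D1 * (norm x)\<^sup>2))"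
      using intq int2 by (intro integrable_mult_right Bochner_Integration.integrable_add) auto
    show "AE x in \<mu>. 0 \<le> \<tau>2\<^sup>2 * D2 * (q x + \<tau>1\<^sup>2 * D1 * (norm x)\<^sup>2)"
      by (auto simp: q_def D1_def D2_def)
  qed
  also have "\<dots> \<le> ennreal (M2_sq \<mu> * real CARD('n0) * real CARD('n1) * real CARD('n2) * \<tau>1\<^sup>2 * \<tau>2\<^sup>2
                    + Mbar2_sq \<mu> * real CARD('n2) * (frob_norm wb1)\<^sup>2 * \<tau>2\<^sup>2)"
  proof (rule ennreal_leI)
    have e: "(\<integral>x. \<tau>2\<^sup>2 * D2 * (q x + \<tau>1\<^sup>2 * D1 * (norm x)\<^sup>2) \<partial>\<mu>) =
       \<tau>2\<^sup>2 * D2 * integral\<^sup>L \<mu> q + \<tau>2\<^sup>2 * D2 * \<tau>1\<^sup>2 * D1 * (\<integral>x. (norm x)\<^sup>2 \<partial>\<mu>)"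
      using intq int2 by (simp add: Bochner_Integration.integral_add algebra_simps)
    have D0p: "D0 > 0" by (simp add: D0_def)
    have m2: "(\<integral>x. (norm x)\<^sup>2 \<partial>\<mu>) = M2_sq \<mu> * D0"
      using D0p by (simp add: M2_sq_def D0_def)
    have "\<tau>2\<^sup>2 * D2 * integral\<^sup>L \<mu> q \<le> \<tau>2\<^sup>2 * D2 * (Mbar2_sq \<mu> * (frob_norm wb1)\<^sup>2)"
      by (intro mult_left_mono qle) (simp add: D2_def)
    then show "(\<integral>x. \<tau>2\<^sup>2 * D2 * (q x + \<tau>1\<^sup>2 * D1 * (norm x)\<^sup>2) \<partial>\<mu>) \<le>
        M2_sq \<mu> * real CARD('n0) * real CARD('n1) * real CARD('n2) * \<tau>1\<^sup>2 * \<tau>2\<^sup>2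
                    + Mbar2_sq \<mu> * real CARD('n2) * (frob_norm wb1)\<^sup>2 * \<tau>2\<^sup>2"
      unfolding e m2 by (simp add: D0_def D1_def D2_def algebra_simps)
  qed
  finally show ?thesis .
qed

end
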